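(* Let $\mathbf{g}\in H_{1,2,2}$ and let $s$ be a positive integer with $2^s \mid N(\mathbf{g})$. Then $(1+\mathbf{i})^s$ divides $\mathbf{g}$ on the left and on the right in $H_{1,2,2}$, i.e. there exist $\mathbf{h},\mathbf{h}'\in H_{1,2,2}$ with $\mathbf{g}=(1+\mathbf{i})^s\mathbf{h}=\mathbf{h}'(1+\mathbf{i})^s$.
   Context: Let $\mathbf{i},\mathbf{j},\mathbf{k}$ be the standard basis units of the real quaternions; the conjugate of $\mathbf{q}=q_1+q_2\mathbf{i}+q_3\mathbf{j}+q_4\mathbf{k}$ is $\overline{\mathbf{q}}=q_1-q_2\mathbf{i}-q_3\mathbf{j}-q_4\mathbf{k}$ and $N(\mathbf{q})=\mathbf{q}\overline{\mathbf{q}}$. $H_{1,2,2}$ is the $\mathbb{Z}$-module (a subring of the quaternions) generated by $\mathbf{v}_1=1$, $\mathbf{v}_2=\mathbf{i}$, $\mathbf{v}_3=\tfrac12(1+\mathbf{i}+\sqrt2\,\mathbf{j})$, $\mathbf{v}_4=\tfrac12(1+\mathbf{i}+\sqrt2\,\mathbf{k})$; the norm takes nonnegative integer values on it. *)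

theory Defs
  imports Complex_Main
begin

datatype quat = Quat (Re: real) (Im1: real) (Im2: real) (Im3: real)

definition qadd :: "quat \<Rightarrow> quat \<Rightarrow> quat" where
  "qadd p q = Quat (Re p + Re q) (Im1 p + Im1 q) (Im2 p + Im2 q) (Im3 p + Im3 q)"

definition qmul :: "quat \<Rightarrow> quat \<Rightarrow> quat" where
  "qmul p q = Quat
     (Re p * Re q - Im1 p * Im1 q - Im2 p * Im2 q - Im3 p * Im3 q)
     (Re p * Im1 q + Im1 p * Re q + Im2 p * Im3 q - Im3 p * Im2 q)
     (Re p * Im2 q - Im1 p * Im3 q + Im2 p * Re q + Im3 p * Im1 q)
     (Re p * Im3 q + Im1 p * Im2 q - Im2 p * Im1 q + Im3 p * Re q)"

definition qscale :: "real \<Rightarrow> quat \<Rightarrow> quat" where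
  "qscale r q = Quat (r * Re q) (r * Im1 q) (r * Im2 q) (r * Im3 q)"

definition qone :: quat where "qone = Quat 1 0 0 0"
definition qi :: quat where "qi = Quat 0 1 0 0"
definition qj :: quat where "qj = Quat 0 0 1 0"
definition qk :: quat where "qk = Quat 0 0 0 1"

primrec qpow :: "quat \<Rightarrow> nat \<Rightarrow> quat" where
  "qpow q 0 = qone"
| "qpow q (Suc n) = qmul q (qpow q n)"

definition qcnj :: "quat \<Rightarrow> quat" where
  "qcnj q = Quat (Re q) (- Im1 q) (- Im2 q) (- Im3 q)"

definition qN :: "quat \<Rightarrow> quat" where
  "qN q = qmul q (qcnj q)"

definition v1 :: quat where "v1 = qone"
definition v2 :: quat where "v2 = qi"
definition v3 :: quat where "v3 = Quat (1/2) (1/2) (sqrt 2 / 2) 0"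
definition v4 :: quat where "v4 = Quat (1/2) (1/2) 0 (sqrt 2 / 2)"

definition H122 :: "quat set" where
  "H122 = {qadd (qadd (qscale (of_int a) v1) (qscale (of_int b) v2))
                (qadd (qscale (of_int c) v3) (qscale (of_int d) v4)) | a b c d :: int. True}"

end

theory Submission
  imports Defs
begin

definition el :: "int \<Rightarrow> int \<Rightarrow> int \<Rightarrow> int \<Rightarrow> quat" where
  "el a b c d = qadd (qadd (qscale (of_int a) v1) (qscale (of_int b) v2))
                (qadd (qscale (of_int c) v3) (qscale (of_int d) v4))"

definition Nf :: "int \<Rightarrow> int \<Rightarrow> int \<Rightarrow> int \<Rightarrow> int" where
  "Nf a b c d = a^2+b^2+(a+b)*(c+d)+c^2+d^2+c*d"

lemma el_eq: "el a b c d = Quat (a+(c+d)/2) (b+(c+d)/2) (c*sqrt 2/2) (d*sqrt 2/2)"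
  by (simp add: el_def qadd_def qscale_def v1_def v2_def v3_def v4_def qone_def qi_def field_simps)

lemma s2: "sqrt 2 * sqrt 2 = (2::real)" by simp

lemma qN_el: "qN (el a b c d) = Quat (of_int (Nf a b c d)) 0 0 0"
  apply (simp add: qN_def qmul_def qcnj_def el_eq Nf_def)
  apply (simp add: power2_eq_square algebra_simps add_divide_distrib)
  apply (simp add: field_simps)
  done

lemma L1: "qmul (qadd qone qi) (el a b c d) = el (a-b-c) (a+b+d) (c-d) (c+d)"
  apply (simp add: qmul_def qadd_def qone_def qi_def el_eq)
  apply (simp add: algebra_simps add_divide_distrib)
  done

lemma L2: "qmul (el a b c d) (qadd qone qi) = el (a-b-d) (a+b+c) (c+d) (d-c)"
  apply (simp add: qmul_def qadd_def qone_def qi_def el_eq)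
  apply (simp add: algebra_simps add_divide_distrib)
  done

lemma assoc: "qmul p (qmul q r) = qmul (qmul p q) r"
  by (simp add: qmul_def algebra_simps)

lemma pow_comm: "qmul (qpow q n) q = qmul q (qpow q n)"
proof (induction n)
  case 0 then show ?case by (simp add: qone_def qmul_def)
next
  case (Suc n) then show ?case by (simp add: assoc[symmetric])
qed

lemma par: "even (Nf a b c d) \<Longrightarrow> even (c+d) \<and> even (a+b+c)"
  by (auto simp: Nf_def even_add even_mult_iff)

lemma Nf1: "Nf (a-b-c) (a+b+d) (c-d) (c+d) = 2 * Nf a b c d"
  by (simp add: Nf_def power2_eq_square algebra_simps)

lemma Nf2: "Nf (a-b-d) (a+b+c) (c+d) (d-c) = 2 * Nf a b c d"
  by (simp add: Nf_def power2_eq_square algebra_simps)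

lemma left: "2^s dvd Nf a b c d \<Longrightarrow>
   \<exists>a' b' c' d'. el a b c d = qmul (qpow (qadd qone qi) s) (el a' b' c' d')"
proof (induction s arbitrary: a b c d)
  case 0
  then show ?case by (auto simp: qmul_def qone_def)
next
  case (Suc s)
  hence "even (Nf a b c d)" by (simp add: dvd_mult_left)
  from par[OF this] obtain u v where u: "c+d = 2*u" and v: "a+b+c = 2*v"
    by (meson evenE)
  define a1 b1 c1 d1 where "a1 = v" "b1 = v - a - u" "c1 = u" "d1 = u - c"
  have e: "a = a1-b1-c1" "b = a1+b1+d1" "c = c1-d1" "d = c1+d1"
    using u v unfolding a1_b1_c1_d1_def by linarith+
  have "2^s dvd Nf a1 b1 c1 d1"
    using Suc.prems unfolding e Nf1 by simp
  from Suc.IH[OF this] obtain a' b' c' d' where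
    h: "el a1 b1 c1 d1 = qmul (qpow (qadd qone qi) s) (el a' b' c' d')" by blast
  have "el a b c d = qmul (qadd qone qi) (el a1 b1 c1 d1)" unfolding e L1 ..
  also have "\<dots> = qmul (qpow (qadd qone qi) (Suc s)) (el a' b' c' d')"
    by (simp add: h assoc)
  finally show ?case by blast
qed

lemma right: "2^s dvd Nf a b c d \<Longrightarrow>
   \<exists>a' b' c' d'. el a b c d = qmul (el a' b' c' d') (qpow (qadd qone qi) s)"
proof (induction s arbitrary: a b c d)
  case 0
  then show ?case by (auto simp: qmul_def qone_def)
next
  case (Suc s)
  hence "even (Nf a b c d)" by (simp add: dvd_mult_left)
  from par[OF this] obtain u v where u: "c+d = 2*u" and v: "a+b+c = 2*v"
    by (meson evenE)
  define a1 b1 c1 d1 where "a1 = v - c + u" "b1 = v - a - c" "c1 = c - u" "d1 = u"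
  have e: "a = a1-b1-d1" "b = a1+b1+c1" "c = c1+d1" "d = d1-c1"
    using u v unfolding a1_b1_c1_d1_def by linarith+
  have "2^s dvd Nf a1 b1 c1 d1"
    using Suc.prems unfolding e Nf2 by simp
  from Suc.IH[OF this] obtain a' b' c' d' where
    h: "el a1 b1 c1 d1 = qmul (el a' b' c' d') (qpow (qadd qone qi) s)" by blast
  have "el a b c d = qmul (el a1 b1 c1 d1) (qadd qone qi)" unfolding e L2 ..
  also have "\<dots> = qmul (el a' b' c' d') (qpow (qadd qone qi) (Suc s))"
    by (simp add: h, metis assoc pow_comm)
  finally show ?case by blast
qed

theorem corollary4:
  fixes g :: quat and s :: nat
  assumes "g \<in> H122" and "s > 0"
    and "\<exists>n::int. qN g = Quat (of_int n) 0 0 0 \<and> (2::int) ^ s dvd n"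
  shows "\<exists>h \<in> H122. \<exists>h' \<in> H122.
           g = qmul (qpow (qadd qone qi) s) h \<and> g = qmul h' (qpow (qadd qone qi) s)"
proof -
  obtain a b c d where g: "g = el a b c d" using assms(1) unfolding H122_def el_def by blast
  obtain n where n: "qN g = Quat (of_int n) 0 0 0" "(2::int) ^ s dvd n" using assms(3) by blast
  have "n = Nf a b c d" using n(1) unfolding g qN_el by simp
  hence d: "2^s dvd Nf a b c d" using n(2) by simp
  have mem: "el x y z w \<in> H122" for x y z w unfolding H122_def el_def by blast
  from left[OF d] right[OF d] show ?thesis using mem g by blast
qed

end
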